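(* Let $\mathcal{S}$ be a state space, let $\mathcal{A}\subset\mathbb{R}^d$ be an action space of finite positive Lebesgue measure, let $R:\mathcal{S}\times\mathcal{A}\to\mathbb{R}$ be a reward function, let $\tau(\cdot\mid s,a)$ be a transition kernel, and let $\gamma\in(0,1)$ and $\tilde{\alpha}>0$. Let $\mathcal{Q}$ be a probability distribution over (measurable) functions $Q:\mathcal{S}\times\mathcal{A}\to\mathbb{R}$ such that for every $(s,a)$ the random variable $Q(s,a)$, $Q\sim\mathcal{Q}$, has bounded support and is sub-Gaussian with mean $\mu(s,a)$ and variance proxy $\sigma^2(s,a)$. For a next state $s'$ define $$\mathcal{T}^{*}Q(s,a)=R(s,a)+\gamma\,\mathbb{E}_{Q\sim\mathcal{Q}}\Big[\tilde{\alpha}\log\Big(\int_{\mathcal{A}}\exp\big(\tilde{\alpha}^{-1}Q(s',a')\big)\,da'\Big)\Big],$$ and let $$\mathcal{T}^{*}\mu(s,a)=R(s,a)+\gamma\,\mathbb{E}_{s'\sim\tau(\cdot\mid s,a)}\Big[\tilde{\alpha}\log\Big(\int_{\mathcal{A}}\exp\big(\tilde{\alpha}^{-1}\mu(s',a')\big)\,da'\Big)\Big].$$ Define the overestimation error $\epsilon(s,a)=\mathbb{E}_{s'\sim\tau(\cdot\mid s,a)}\big[\mathcal{T}^{*}Q(s,a)\big]-\mathcal{T}^{*}\mu(s,a)$. Then for all $(s,a)$, $$\epsilon(s,a)\le\frac{\gamma}{2\tilde{\alpha}}\,\mathbb{E}_{s'\sim\tau(\cdot\mid s,a)}\Big[\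sup_{a'\in\mathcal{A}}\sigma^2(s',a')\Big].$$
   Context: A real random variable $X$ with mean $\mu=\mathbb{E}[X]$ is called sub-Gaussian with variance proxy $\sigma^2$ if $\mathbb{E}[\exp(\lambda X)]\le\exp(\lambda\mu+\tfrac12\lambda^2\sigma^2)$ for all $\lambda\in\mathbb{R}$. Here $\mu(s,a)=\mathbb{E}_{Q\sim\mathcal{Q}}[Q(s,a)]$, and all expectations are assumed well defined. *)

theory Defs
  imports "HOL-Probability.Probability"
begin

definition soft_value :: "real \<Rightarrow> 'a::euclidean_space set \<Rightarrow> ('a \<Rightarrow> real) \<Rightarrow> real" where
  "soft_value \<alpha> A f = \<alpha> * ln (\<integral>a\<in>A. exp (f a / \<alpha>) \<partial>lborel)"

definition sub_gaussian :: "'b measure \<Rightarrow> ('b \<Rightarrow> real) \<Rightarrow> real \<Rightarrow> bool" where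
  "sub_gaussian M X \<sigma>2 \<longleftrightarrow>
     (\<forall>l::real. (\<integral>x. exp (l * X x) \<partial>M) \<le> exp (l * (\<integral>x. X x \<partial>M) + l\<^sup>2 * \<sigma>2 / 2))"

definition mean_Q :: "('s \<Rightarrow> 'a \<Rightarrow> real) measure \<Rightarrow> 's \<Rightarrow> 'a \<Rightarrow> real" where
  "mean_Q QQ s a = (\<integral>Q. Q s a \<partial>QQ)"

definition bellman_Q ::
  "('s \<Rightarrow> 'a \<Rightarrow> real) \<Rightarrow> real \<Rightarrow> real \<Rightarrow> 'a::euclidean_space set
     \<Rightarrow> ('s \<Rightarrow> 'a \<Rightarrow> real) measure \<Rightarrow> 's \<Rightarrow> 'a \<Rightarrow> 's \<Rightarrow> real" where
  "bellman_Q R \<gamma> \<alpha> A QQ s a s' = R s a + \<gamma> * (\<integral>Q. soft_value \<alpha> A (Q s') \<partial>QQ)"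

definition bellman_mu ::
  "('s \<Rightarrow> 'a \<Rightarrow> real) \<Rightarrow> real \<Rightarrow> real \<Rightarrow> 'a::euclidean_space set
     \<Rightarrow> ('s \<Rightarrow> 'a \<Rightarrow> 's measure) \<Rightarrow> ('s \<Rightarrow> 'a \<Rightarrow> real) \<Rightarrow> 's \<Rightarrow> 'a \<Rightarrow> real" where
  "bellman_mu R \<gamma> \<alpha> A \<tau> \<mu> s a = R s a + \<gamma> * (\<integral>s'. soft_value \<alpha> A (\<mu> s') \<partial>\<tau> s a)"

definition overest_error ::
  "('s \<Rightarrow> 'a \<Rightarrow> real) \<Rightarrow> real \<Rightarrow> real \<Rightarrow> 'a::euclidean_space set
     \<Rightarrow> ('s \<Rightarrow> 'a \<Rightarrow> 's measure) \<Rightarrow> ('s \<Rightarrow> 'a \<Rightarrow> real) measure \<Rightarrow> 's \<Rightarrow> 'a \<Rightarrow> real" where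
  "overest_error R \<gamma> \<alpha> A \<tau> QQ s a =
     (\<integral>s'. bellman_Q R \<gamma> \<alpha> A QQ s a s' \<partial>\<tau> s a) - bellman_mu R \<gamma> \<alpha> A \<tau> (mean_Q QQ) s a"

end

theory Submission
  imports Defs
begin
lemma nn_cmult_real:
  assumes "0 \<le> t" "\<And>a. 0 \<le> X a" "X \<in> borel_measurable M"
  shows "(\<integral>\<^sup>+a. ennreal (t * X a) \<partial>M) = ennreal t * (\<integral>\<^sup>+a. ennreal (X a) \<partial>M)"
proof -
  have "(\<integral>\<^sup>+a. ennreal (t * X a) \<partial>M) = (\<integral>\<^sup>+a. ennreal t * ennreal (X a) \<partial>M)"
    using assms by (simp add: ennreal_mult)
  also have "\<dots> = ennreal t * (\<integral>\<^sup>+a. ennreal (X a) \<partial>M)"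
    using assms by (intro nn_integral_cmult) auto
  finally show ?thesis .
qed

lemma amgm: "0 < x \<Longrightarrow> 2 \<le> x + 1/(x::real)"
proof -
  assume x: "0 < x"
  have "0 \<le> (x-1)^2" by simp
  then have "2*x \<le> x*x + 1" by (simp add: power2_eq_square algebra_simps)
  then show ?thesis using x by (simp add: field_simps)
qed

lemma amgm_exp:
  fixes t x y :: real
  assumes t: "0 < t"
  shows "2 * exp x \<le> t * exp y + (1/t) * exp (2*x - y)"
proof -
  define u where "u = t * exp (y - x)"
  have u: "0 < u" using t by (simp add: u_def)
  have "2 \<le> u + 1/u" by (rule amgm[OF u])
  then have "exp x * 2 \<le> exp x * (u + 1/u)" by simp
  also have "exp x * (u + 1/u) = t * exp y + (1/t) * exp (2*x - y)"
  proof -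
    have e1: "exp (y - x) = exp y / exp x" by (simp add: exp_diff)
    have e0: "exp (2*x) = exp x * exp x" by (metis exp_add mult_2)
    have e2: "exp (2*x - y) = exp x * exp x / exp y" by (simp only: exp_diff e0)
    show ?thesis unfolding u_def e1 e2 using t by (simp add: field_simps)
  qed
  finally show ?thesis by simp
qed

lemma key:
  fixes M :: "'q measure" and f :: "'q \<Rightarrow> 'a::euclidean_space \<Rightarrow> real"
    and \<sigma> :: "'a \<Rightarrow> real" and A :: "'a set" and \<alpha> :: real
  assumes P: "prob_space M"
   and meas[measurable]: "(\<lambda>(Q,a). f Q a) \<in> borel_measurable (M \<Otimes>\<^sub>M lborel)"
   and Ameas[measurable]: "A \<in> sets lborel"
   and Apos: "0 < emeasure lborel A" and Afin: "emeasure lborel A < \<infinity>"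
   and alpha: "0 < \<alpha>"
   and bnd: "\<And>a. \<exists>B. AE Q in M. \<bar>f Q a\<bar> \<le> B"
   and sg: "\<And>a l. (\<integral>Q. exp (l * f Q a) \<partial>M) \<le> exp (l * (\<integral>Q. f Q a \<partial>M) + l\<^sup>2 * \<sigma> a / 2)"
   and bdd: "bdd_above (\<sigma> ` A)"
   and int: "integrable M (\<lambda>Q. soft_value \<alpha> A (f Q))"
  shows "(\<integral>Q. soft_value \<alpha> A (f Q) \<partial>M)
     \<le> soft_value \<alpha> A (\<lambda>a. \<integral>Q. f Q a \<partial>M) + (SUP a\<in>A. \<sigma> a) / (2*\<alpha>)"
proof -
  interpret prob_space M by (rule P)
  interpret pair_sigma_finite M lborel
    by (simp add: pair_sigma_finite_def sigma_finite_measure_axioms lborel.sigma_finite_measure_axioms)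
  define m where "m a = (\<integral>Q. f Q a \<partial>M)" for a
  have m_eq: "(\<lambda>a. \<integral>Q. f Q a \<partial>M) = m" by (rule ext) (simp add: m_def)
  define S where "S = (SUP a\<in>A. \<sigma> a)"
  define c where "c = exp (S / (2*\<alpha>\<^sup>2))"
  have cpos: "0 < c" by (simp add: c_def)
  define Zp where "Zp g = (\<integral>\<^sup>+a. ennreal (indicator A a * exp (g a / \<alpha>)) \<partial>lborel)" for g
  have fQ[measurable]: "f Q \<in> borel_measurable lborel" if "Q \<in> space M" for Q
    using measurable_comp[OF measurable_Pair1'[OF that] meas] by (simp add: o_def)
  have fa[measurable]: "(\<lambda>Q. f Q a) \<in> borel_measurable M" for a
    using measurable_comp[OF measurable_Pair2'[of a lborel M] meas] by (simp add: o_def)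
  have swp: "(\<lambda>(a,Q). f Q a) \<in> borel_measurable (lborel \<Otimes>\<^sub>M M)"
    using measurable_pair_swap[OF meas] by simp
  have mm[measurable]: "m \<in> borel_measurable lborel"
    unfolding m_def using sigma_finite_measure.borel_measurable_lebesgue_integral[OF prob_space_imp_sigma_finite[OF P] swp] by simp
  have sv: "soft_value \<alpha> A g = \<alpha> * ln (enn2real (Zp g))" if [measurable]: "g \<in> borel_measurable lborel" for g
  proof -
    have "(\<integral>a\<in>A. exp (g a / \<alpha>) \<partial>lborel) = (\<integral>a. indicator A a * exp (g a / \<alpha>) \<partial>lborel)"
      unfolding set_lebesgue_integral_def by simp
    also have "\<dots> = enn2real (Zp g)"
      unfolding Zp_def by (rule integral_eq_nn_integral) auto
    finally show ?thesis unfolding soft_value_def by simp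
  qed
  have intf: "integrable M (\<lambda>Q. exp (l * f Q a))" for a l
  proof -
    obtain B where B: "AE Q in M. \<bar>f Q a\<bar> \<le> B" using bnd by blast
    have "AE Q in M. norm (exp (l * f Q a)) \<le> exp (\<bar>l\<bar> * B)"
      using B
    proof eventually_elim
      case (elim Q)
      have "l * f Q a \<le> \<bar>l\<bar> * \<bar>f Q a\<bar>"
        by (simp add: abs_mult[symmetric])
      also have "\<dots> \<le> \<bar>l\<bar> * B"
        using elim by (rule mult_left_mono) simp
      finally show ?case by simp
    qed
    moreover have "(\<lambda>Q. exp (l * f Q a)) \<in> borel_measurable M" by measurable
    ultimately show ?thesis by (rule integrable_const_bound)
  qed
  have intf1: "integrable M (\<lambda>Q. f Q a)" for a
  proof -
    obtain B where B: "AE Q in M. \<bar>f Q a\<bar> \<le> B" using bnd by blast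
    then show ?thesis by (intro integrable_const_bound[where B=B]) auto
  qed
  have sigS: "\<sigma> a \<le> S" if "a \<in> A" for a
    unfolding S_def using bdd that by (rule cSUP_upper2) simp
  have expbound: "exp (m a / \<alpha> + \<sigma> a / (2*\<alpha>\<^sup>2)) \<le> c * exp (m a / \<alpha>)" if "a \<in> A" for a
  proof -
    have "\<sigma> a / (2*\<alpha>\<^sup>2) \<le> S / (2*\<alpha>\<^sup>2)"
      using sigS[OF that] by (simp add: divide_right_mono)
    then show ?thesis by (simp add: c_def mult_exp_exp add.commute)
  qed
  have E1: "(\<integral>\<^sup>+Q. ennreal (exp (f Q a / \<alpha>)) \<partial>M) \<le> ennreal (c * exp (m a / \<alpha>))" if "a \<in> A" for a
  proof -
    have "(\<integral>\<^sup>+Q. ennreal (exp (f Q a / \<alpha>)) \<partial>M) = ennreal (\<integral>Q. exp ((1/\<alpha>) * f Q a) \<partial>M)"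
      using intf[of "1/\<alpha>" a] by (subst nn_integral_eq_integral) auto
    also have "(\<integral>Q. exp ((1/\<alpha>) * f Q a) \<partial>M) \<le> exp ((1/\<alpha>) * m a + (1/\<alpha>)\<^sup>2 * \<sigma> a / 2)"
      using sg[of "1/\<alpha>" a] by (simp add: m_def)
    also have "\<dots> = exp (m a / \<alpha> + \<sigma> a / (2*\<alpha>\<^sup>2))"
      by (simp add: power2_eq_square field_simps)
    also have "\<dots> \<le> c * exp (m a / \<alpha>)"
      by (rule expbound[OF that])
    finally show ?thesis by (simp add: ennreal_leI)
  qed
  have E2: "(\<integral>\<^sup>+Q. ennreal (exp ((2 * m a - f Q a) / \<alpha>)) \<partial>M) \<le> ennreal (c * exp (m a / \<alpha>))" if "a \<in> A" for a
  proof -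
    have eq: "exp ((2 * m a - f Q a) / \<alpha>) = exp (2 * m a / \<alpha>) * exp ((-1/\<alpha>) * f Q a)" for Q
      by (simp add: mult_exp_exp diff_divide_distrib)
    have "(\<integral>\<^sup>+Q. ennreal (exp ((2 * m a - f Q a) / \<alpha>)) \<partial>M)
        = ennreal (\<integral>Q. exp (2 * m a / \<alpha>) * exp ((-1/\<alpha>) * f Q a) \<partial>M)"
      unfolding eq using intf[of "-1/\<alpha>" a] by (subst nn_integral_eq_integral) auto
    also have "(\<integral>Q. exp (2 * m a / \<alpha>) * exp ((-1/\<alpha>) * f Q a) \<partial>M)
        = exp (2 * m a / \<alpha>) * (\<integral>Q. exp ((-1/\<alpha>) * f Q a) \<partial>M)" by simp
    also have "\<dots> \<le> exp (2 * m a / \<alpha>) * exp ((-1/\<alpha>) * m a + (-1/\<alpha>)\<^sup>2 * \<sigma> a / 2)"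
      using sg[of "-1/\<alpha>" a] by (intro mult_left_mono) (simp_all add: m_def)
    also have "\<dots> = exp (m a / \<alpha> + \<sigma> a / (2*\<alpha>\<^sup>2))"
      by (simp add: mult_exp_exp power2_eq_square field_simps)
    also have "\<dots> \<le> c * exp (m a / \<alpha>)"
      by (rule expbound[OF that])
    finally show ?thesis by (simp add: ennreal_leI)
  qed
  have Ane: "A \<noteq> {}" using Apos by auto
  have sig0: "0 \<le> \<sigma> a" for a
  proof -
    have "exp (m a) \<le> (\<integral>Q. exp (1 * f Q a) \<partial>M)"
    proof -
      have "(\<integral>Q. exp (m a) * (1 + (f Q a - m a)) \<partial>M) \<le> (\<integral>Q. exp (1 * f Q a) \<partial>M)"
      proof (rule integral_mono)
        show "integrable M (\<lambda>Q. exp (m a) * (1 + (f Q a - m a)))" using intf1[of a] by simp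
        show "integrable M (\<lambda>Q. exp (1 * f Q a))" by (rule intf)
        fix Q
        have "exp (m a) * (1 + (f Q a - m a)) \<le> exp (m a) * exp (f Q a - m a)"
          by (intro mult_left_mono exp_ge_add_one_self) simp
        then show "exp (m a) * (1 + (f Q a - m a)) \<le> exp (1 * f Q a)"
          by (simp add: mult_exp_exp)
      qed
      moreover have "(\<integral>Q. exp (m a) * (1 + (f Q a - m a)) \<partial>M) = exp (m a)"
        using intf1[of a] prob_space by (simp add: m_def algebra_simps)
      ultimately show ?thesis by simp
    qed
    also have "\<dots> \<le> exp (m a + \<sigma> a / 2)"
      using sg[of 1 a] by (simp add: m_def)
    finally show ?thesis by simp
  qed
  have S0: "0 \<le> S"
  proof -
    obtain a where "a \<in> A" using Ane by blast
    then show ?thesis using sig0[of a] sigS[of a] by linarith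
  qed
  have Zpos: "0 < Zp g" if [measurable]: "g \<in> borel_measurable lborel" for g
  proof (rule ccontr)
    assume "\<not> 0 < Zp g"
    then have "Zp g = 0" by (simp add: zero_less_iff_neq_zero)
    then have "AE a in lborel. ennreal (indicator A a * exp (g a / \<alpha>)) = 0"
      unfolding Zp_def by (subst (asm) nn_integral_0_iff_AE) auto
    then have "AE a in lborel. a \<notin> A"
      by eventually_elim (auto simp: indicator_def)
    then have "A \<in> null_sets lborel" using AE_iff_null_sets[OF Ameas] by simp
    then show False using Apos by auto
  qed
  have ZpM[measurable]: "(\<lambda>Q. Zp (f Q)) \<in> borel_measurable M"
    unfolding Zp_def by measurable
  define I where "I = Zp m"
  have svm: "soft_value \<alpha> A m = \<alpha> * ln (enn2real I)" using sv[OF mm] by (simp add: I_def)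
  have EZ: "(\<integral>\<^sup>+Q. Zp (f Q) \<partial>M) \<le> ennreal c * I"
  proof -
    have "(\<integral>\<^sup>+Q. Zp (f Q) \<partial>M)
        = (\<integral>\<^sup>+a. \<integral>\<^sup>+Q. ennreal (indicator A a * exp (f Q a / \<alpha>)) \<partial>M \<partial>lborel)"
      unfolding Zp_def by (rule Fubini'[symmetric]) measurable
    also have "\<dots> \<le> (\<integral>\<^sup>+a. ennreal c * ennreal (indicator A a * exp (m a / \<alpha>)) \<partial>lborel)"
    proof (rule nn_integral_mono)
      fix a
      show "(\<integral>\<^sup>+Q. ennreal (indicator A a * exp (f Q a / \<alpha>)) \<partial>M)
          \<le> ennreal c * ennreal (indicator A a * exp (m a / \<alpha>))"
      proof (cases "a \<in> A")
        case True
        then show ?thesis using E1[OF True] cpos by (simp add: ennreal_mult[symmetric])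
      next
        case False
        then show ?thesis by simp
      qed
    qed
    also have "\<dots> = ennreal c * I"
      unfolding I_def Zp_def by (rule nn_integral_cmult) measurable
    finally show ?thesis .
  qed
  show ?thesis
  proof (cases "I = \<infinity>")
    case False
    define Ir where "Ir = enn2real I"
    have I_eq: "I = ennreal Ir" using False by (simp add: Ir_def less_top)
    have Ipos: "0 < Ir"
      using Zpos[OF mm] I_eq by (simp add: I_def)
    define C where "C = c * Ir"
    have Cpos: "0 < C" using cpos Ipos by (simp add: C_def)
    have EZ': "(\<integral>\<^sup>+Q. Zp (f Q) \<partial>M) \<le> ennreal C"
      using EZ cpos Ipos by (simp add: I_eq C_def ennreal_mult)
    have finZ: "AE Q in M. Zp (f Q) \<noteq> \<infinity>"
      by (rule nn_integral_PInf_AE) (use EZ' in \<open>auto simp: top_unique\<close>)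
    define z where "z Q = enn2real (Zp (f Q))" for Q
    have zM[measurable]: "z \<in> borel_measurable M" unfolding z_def by measurable
    have zz: "(\<integral>\<^sup>+Q. ennreal (z Q) \<partial>M) = (\<integral>\<^sup>+Q. Zp (f Q) \<partial>M)"
      by (rule nn_integral_cong_AE) (use finZ in \<open>auto simp: z_def less_top\<close>)
    have zint: "integrable M z"
    proof (rule integrableI_bounded)
      have "(\<integral>\<^sup>+Q. Zp (f Q) \<partial>M) < \<top>" using EZ' by (rule le_less_trans) simp
      then show "(\<integral>\<^sup>+ x. ennreal (norm (z x)) \<partial>M) < \<infinity>" using zz by (simp add: z_def)
    qed simp
    have Ez: "(\<integral>Q. z Q \<partial>M) \<le> C"
    proof -
      have "(\<integral>Q. z Q \<partial>M) = enn2real (\<integral>\<^sup>+Q. ennreal (z Q) \<partial>M)"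
        by (rule integral_eq_nn_integral) (auto simp: z_def)
      also have "\<dots> \<le> enn2real (ennreal C)"
        unfolding zz by (rule enn2real_mono[OF EZ']) simp
      finally show ?thesis using Cpos by simp
    qed
    have pw: "AE Q in M. soft_value \<alpha> A (f Q) \<le> \<alpha> * ln C + \<alpha> * (z Q / C) - \<alpha>"
      using AE_space finZ
    proof eventually_elim
      case (elim Q)
      then have QM: "Q \<in> space M" by simp
      have zp: "0 < z Q"
        using Zpos[OF fQ[OF QM]] elim(2) by (simp add: z_def enn2real_positive_iff less_top)
      have "ln (z Q / C) \<le> z Q / C - 1" by (rule ln_le_minus_one) (use zp Cpos in simp)
      then have "ln (z Q) \<le> ln C + z Q / C - 1" using zp Cpos by (simp add: ln_div)
      then have "\<alpha> * ln (z Q) \<le> \<alpha> * (ln C + z Q / C - 1)" using alpha by simp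
      then show ?case using sv[OF fQ[OF QM]] by (simp add: z_def algebra_simps)
    qed
    have "(\<integral>Q. soft_value \<alpha> A (f Q) \<partial>M) \<le> (\<integral>Q. \<alpha> * ln C + \<alpha> * (z Q / C) - \<alpha> \<partial>M)"
      by (rule integral_mono_AE[OF int _ pw]) (use zint in simp)
    also have "\<dots> = \<alpha> * ln C + \<alpha> * ((\<integral>Q. z Q \<partial>M) / C) - \<alpha>"
      using zint by (simp add: prob_space)
    also have "\<dots> \<le> \<alpha> * ln C"
    proof -
      have "(\<integral>Q. z Q \<partial>M) / C \<le> 1" using Ez Cpos by simp
      then have "\<alpha> * ((\<integral>Q. z Q \<partial>M) / C) \<le> \<alpha> * 1" using alpha by (intro mult_left_mono) auto
      then show ?thesis by simp
    qed
    also have "\<alpha> * ln C = soft_value \<alpha> A m + S / (2*\<alpha>)"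
    proof -
      have "ln C = S / (2*\<alpha>\<^sup>2) + ln Ir" using cpos Ipos by (simp add: C_def ln_mult c_def)
      then show ?thesis using alpha by (simp add: svm Ir_def power2_eq_square field_simps)
    qed
    finally show ?thesis by (simp add: m_eq S_def)
  next
    case True
    define B where "B n = {a\<in>A. m a \<le> real n}" for n :: nat
    have Bm[measurable]: "B n \<in> sets lborel" for n unfolding B_def by measurable
    have BA: "B n \<subseteq> A" for n unfolding B_def by auto
    define W where "W n = (\<integral>\<^sup>+a. ennreal (indicator (B n) a * exp (m a / \<alpha>)) \<partial>lborel)" for n
    have Wfin: "W n < \<infinity>" for n
    proof -
      have "W n \<le> (\<integral>\<^sup>+a. ennreal (exp (real n / \<alpha>)) * indicator A a \<partial>lborel)"
        unfolding W_def
      proof (rule nn_integral_mono)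
        fix a
        show "ennreal (indicator (B n) a * exp (m a / \<alpha>)) \<le> ennreal (exp (real n / \<alpha>)) * indicator A a"
        proof (cases "a \<in> B n")
          case True
          then have "m a / \<alpha> \<le> real n / \<alpha>" using alpha by (simp add: B_def divide_right_mono)
          moreover have "a \<in> A" using True BA by auto
          ultimately show ?thesis using True by (simp add: ennreal_leI)
        next
          case False
          then show ?thesis by simp
        qed
      qed
      also have "\<dots> = ennreal (exp (real n / \<alpha>)) * emeasure lborel A"
        by (rule nn_integral_cmult_indicator) (use Ameas in simp)
      also have "\<dots> < \<infinity>" using Afin by (simp add: ennreal_mult_less_top)
      finally show ?thesis .
    qed
    have Wsup: "(SUP n. W n) = I"
    proof -
      define g where "g n a = ennreal (indicator (B n) a * exp (m a / \<alpha>))" for n a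
      have inc: "incseq g"
      proof (rule incseq_SucI, rule le_funI)
        fix n a
        show "g n a \<le> g (Suc n) a"
          unfolding g_def B_def by (auto simp: indicator_def intro!: ennreal_leI)
      qed
      have "(SUP n. W n) = (\<integral>\<^sup>+a. (SUP n. g n a) \<partial>lborel)"
        unfolding W_def g_def[symmetric]
      proof (rule nn_integral_monotone_convergence_SUP[symmetric, OF inc])
        fix n
        have [measurable]: "B n \<in> sets borel" using Bm[of n] by simp
        show "g n \<in> borel_measurable lborel" unfolding g_def by measurable
      qed
      also have "\<dots> = I"
        unfolding I_def Zp_def
      proof (rule nn_integral_cong)
        fix a
        show "(SUP n. g n a) = ennreal (indicator A a * exp (m a / \<alpha>))"
        proof (cases "a \<in> A")
          case False
          then have "a \<notin> B n" for n using BA by auto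
          then show ?thesis using False by (simp add: g_def)
        next
          case True
          obtain n0 where n0: "m a \<le> real n0" using real_arch_simple by blast
          show ?thesis
          proof (rule antisym)
            show "(SUP n. g n a) \<le> ennreal (indicator A a * exp (m a / \<alpha>))"
              using True by (auto intro!: SUP_least ennreal_leI simp: g_def indicator_def)
            show "ennreal (indicator A a * exp (m a / \<alpha>)) \<le> (SUP n. g n a)"
              by (rule SUP_upper2[of n0]) (use True n0 in \<open>auto simp: g_def B_def\<close>)
          qed
        qed
      qed
      finally show ?thesis .
    qed
    have Wbig: "\<exists>n. ennreal K < W n" for K
    proof -
      have "ennreal K < \<infinity>" by simp
      then have "ennreal K < (SUP n. W n)" by (simp only: Wsup True)
      then show ?thesis by (simp add: less_SUP_iff)
    qed
    define V where "V n Q = (\<integral>\<^sup>+a. ennreal (indicator (B n) a * exp ((2 * m a - f Q a) / \<alpha>)) \<partial>lborel)" for n Q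
    have VM[measurable]: "(\<lambda>Q. V n Q) \<in> borel_measurable M" for n
      unfolding V_def by measurable
    have EV: "(\<integral>\<^sup>+Q. V n Q \<partial>M) \<le> ennreal c * W n" for n
    proof -
      have "(\<integral>\<^sup>+Q. V n Q \<partial>M)
          = (\<integral>\<^sup>+a. \<integral>\<^sup>+Q. ennreal (indicator (B n) a * exp ((2 * m a - f Q a) / \<alpha>)) \<partial>M \<partial>lborel)"
        unfolding V_def by (rule Fubini'[symmetric]) measurable
      also have "\<dots> \<le> (\<integral>\<^sup>+a. ennreal c * ennreal (indicator (B n) a * exp (m a / \<alpha>)) \<partial>lborel)"
      proof (rule nn_integral_mono)
        fix a
        show "(\<integral>\<^sup>+Q. ennreal (indicator (B n) a * exp ((2 * m a - f Q a) / \<alpha>)) \<partial>M)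
            \<le> ennreal c * ennreal (indicator (B n) a * exp (m a / \<alpha>))"
        proof (cases "a \<in> B n")
          case True
          then have "a \<in> A" using BA by auto
          then show ?thesis using E2[of a] True cpos by (simp add: ennreal_mult[symmetric])
        next
          case False
          then show ?thesis by simp
        qed
      qed
      also have "\<dots> = ennreal c * W n"
        unfolding W_def by (rule nn_integral_cmult) measurable
      finally show ?thesis .
    qed
    have bound: "measure M {Q\<in>space M. Zp (f Q) \<le> ennreal N'} \<le> c * N' / Wr"
      if N': "1 \<le> N'" and Wr: "0 < Wr" "W n = ennreal Wr" for N' Wr n
    proof -
      define \<kappa> where "\<kappa> = N' / Wr\<^sup>2"
      have kpos: "0 < \<kappa>" using N' Wr by (simp add: \<kappa>_def)
      have sub: "{Q\<in>space M. Zp (f Q) \<le> ennreal N'} \<subseteq> {Q\<in>space M. 1 \<le> ennreal \<kappa> * V n Q}"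
      proof safe
        fix Q assume QM: "Q \<in> space M" and ZN: "Zp (f Q) \<le> ennreal N'"
        show "1 \<le> ennreal \<kappa> * V n Q"
        proof (cases "V n Q = \<infinity>")
          case True
          then show ?thesis using kpos by (simp add: ennreal_mult_top)
        next
          case False
          define v where "v = enn2real (V n Q)"
          have Vv: "V n Q = ennreal v" using False by (simp add: v_def less_top)
          have v0: "0 \<le> v" by (simp add: v_def)
          define zq where "zq = enn2real (Zp (f Q))"
          have Zfin: "Zp (f Q) \<noteq> \<infinity>" using ZN by (auto simp: top_unique)
          have Zz: "Zp (f Q) = ennreal zq" using Zfin by (simp add: zq_def less_top)
          have z0: "0 \<le> zq" by (simp add: zq_def)
          have zN: "zq \<le> N'" using ZN Zz N' by simp
          define t where "t = Wr / N'"
          have tpos: "0 < t" using Wr N' by (simp add: t_def)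
          have "ennreal 2 * W n = (\<integral>\<^sup>+a. ennreal 2 * ennreal (indicator (B n) a * exp (m a / \<alpha>)) \<partial>lborel)"
            unfolding W_def by (rule nn_integral_cmult[symmetric]) measurable
          also have "\<dots> \<le> (\<integral>\<^sup>+a. ennreal (t * (indicator A a * exp (f Q a / \<alpha>)))
                + ennreal ((1/t) * (indicator (B n) a * exp ((2 * m a - f Q a) / \<alpha>))) \<partial>lborel)"
          proof (rule nn_integral_mono)
            fix a
            show "ennreal 2 * ennreal (indicator (B n) a * exp (m a / \<alpha>))
              \<le> ennreal (t * (indicator A a * exp (f Q a / \<alpha>)))
                + ennreal ((1/t) * (indicator (B n) a * exp ((2 * m a - f Q a) / \<alpha>)))"
            proof (cases "a \<in> B n")
              case True
              then have aA: "a \<in> A" using BA by auto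
              have "2 * exp (m a / \<alpha>) \<le> t * exp (f Q a / \<alpha>) + (1/t) * exp (2 * (m a / \<alpha>) - f Q a / \<alpha>)"
                by (rule amgm_exp[OF tpos])
              also have "2 * (m a / \<alpha>) - f Q a / \<alpha> = (2 * m a - f Q a) / \<alpha>"
                by (simp add: diff_divide_distrib)
              finally have "2 * exp (m a / \<alpha>) \<le> t * exp (f Q a / \<alpha>) + (1/t) * exp ((2 * m a - f Q a) / \<alpha>)" .
              then have "ennreal (2 * exp (m a / \<alpha>)) \<le> ennreal (t * exp (f Q a / \<alpha>) + (1/t) * exp ((2 * m a - f Q a) / \<alpha>))"
                by (rule ennreal_leI)
              also have "\<dots> = ennreal (t * exp (f Q a / \<alpha>)) + ennreal ((1/t) * exp ((2 * m a - f Q a) / \<alpha>))"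
                using tpos by (intro ennreal_plus) auto
              also have "ennreal (2 * exp (m a / \<alpha>)) = ennreal 2 * ennreal (exp (m a / \<alpha>))"
                by (simp add: ennreal_mult)
              finally show ?thesis using True aA by simp
            next
              case False
              then show ?thesis by simp
            qed
          qed
          also have "\<dots> = (\<integral>\<^sup>+a. ennreal (t * (indicator A a * exp (f Q a / \<alpha>))) \<partial>lborel)
                + (\<integral>\<^sup>+a. ennreal ((1/t) * (indicator (B n) a * exp ((2 * m a - f Q a) / \<alpha>))) \<partial>lborel)"
            using QM by (intro nn_integral_add) measurable
          also have "\<dots> = ennreal t * Zp (f Q) + ennreal (1/t) * V n Q"
            unfolding Zp_def V_def using tpos QM
            by (subst (1 2) nn_cmult_real) (auto intro!: measurable_compose[OF fQ[OF QM]])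
          also have "\<dots> = ennreal (t * zq + (1/t) * v)"
          proof -
            have "ennreal (t * zq + (1/t) * v) = ennreal (t * zq) + ennreal ((1/t) * v)"
              using tpos z0 v0 by (intro ennreal_plus) auto
            also have "ennreal (t * zq) = ennreal t * ennreal zq"
              using tpos z0 by (intro ennreal_mult) auto
            also have "ennreal ((1/t) * v) = ennreal (1/t) * ennreal v"
              using tpos v0 by (intro ennreal_mult) auto
            finally show ?thesis by (simp add: Zz Vv)
          qed
          finally have "ennreal (2 * Wr) \<le> ennreal (t * zq + (1/t) * v)"
            using Wr by (simp add: ennreal_mult)
          then have ineq: "2 * Wr \<le> t * zq + (1/t) * v"
            by (subst (asm) ennreal_le_iff) (use tpos z0 v0 in auto)
          have "t * zq \<le> t * N'" using zN tpos by simp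
          also have "t * N' = Wr" using N' by (simp add: t_def)
          finally have "Wr \<le> (1/t) * v" using ineq by simp
          then have "Wr \<le> v * N' / Wr" using N' Wr by (simp add: t_def mult.commute)
          then have "Wr * Wr \<le> v * N'" using Wr by (simp add: le_divide_eq)
          then have "1 \<le> \<kappa> * v" using Wr N' by (simp add: \<kappa>_def power2_eq_square le_divide_eq field_simps)
          then have "ennreal 1 \<le> ennreal (\<kappa> * v)" by (rule ennreal_leI)
          then show ?thesis using kpos v0 by (simp add: Vv ennreal_mult)
        qed
      qed
      have "emeasure M {Q\<in>space M. Zp (f Q) \<le> ennreal N'} \<le> emeasure M {Q\<in>space M. 1 \<le> ennreal \<kappa> * V n Q}"
        by (rule emeasure_mono[OF sub]) measurable
      also have "\<dots> \<le> ennreal \<kappa> * set_nn_integral M (space M) (V n)"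
        by (rule nn_integral_Markov_inequality) measurable
      also have "set_nn_integral M (space M) (V n) = (\<integral>\<^sup>+Q. V n Q \<partial>M)"
        by (rule nn_integral_cong) simp
      also have "ennreal \<kappa> * \<dots> \<le> ennreal \<kappa> * (ennreal c * W n)"
        by (rule mult_left_mono[OF EV]) simp
      also have "\<dots> = ennreal (c * N' / Wr)"
        using Wr kpos cpos by (simp add: ennreal_mult[symmetric] \<kappa>_def power2_eq_square field_simps)
      finally show ?thesis
        using Wr cpos N' by (simp add: emeasure_eq_measure ennreal_le_iff)
    qed
    have AEN: "AE Q in M. ennreal (real N + 1) < Zp (f Q)" for N :: nat
    proof -
      define N' where "N' = real N + 1"
      have N': "1 \<le> N'" by (simp add: N'_def)
      let ?E = "{Q\<in>space M. Zp (f Q) \<le> ennreal N'}"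
      have Em: "?E \<in> sets M" by measurable
      have "measure M ?E \<le> 0"
      proof (rule field_le_epsilon)
        fix e :: real assume e: "0 < e"
        define K where "K = c * N' / e"
        have Kpos: "0 < K" using cpos N' e by (simp add: K_def)
        obtain n where n: "ennreal K < W n" using Wbig by blast
        define Wr where "Wr = enn2real (W n)"
        have WW: "W n = ennreal Wr" using Wfin[of n] by (simp add: Wr_def less_top)
        have KW: "K < Wr" using n Kpos WW by (simp add: ennreal_less_iff)
        have "measure M ?E \<le> c * N' / Wr"
          by (rule bound[OF N' _ WW]) (use KW Kpos in simp)
        also have "\<dots> \<le> c * N' / K"
          using KW Kpos cpos N' by (intro divide_left_mono) auto
        also have "\<dots> = e" using cpos N' e by (simp add: K_def)
        finally show "measure M ?E \<le> 0 + e" by simp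
      qed
      then have "measure M ?E = 0" by (intro antisym) auto
      then have E0: "emeasure M ?E = 0" by (simp add: emeasure_eq_measure)
      have eqE: "{Q\<in>space M. \<not> ennreal (real N + 1) < Zp (f Q)} = ?E"
        by (auto simp: N'_def not_less)
      show ?thesis by (rule AE_iff_measurable[OF Em eqE, THEN iffD2]) (rule E0)
    qed
    have AEinf: "AE Q in M. Zp (f Q) = \<infinity>"
    proof -
      have "AE Q in M. \<forall>N::nat. ennreal (real N + 1) < Zp (f Q)"
        unfolding AE_all_countable using AEN by blast
      then show ?thesis
      proof eventually_elim
        case (elim Q)
        show ?case
        proof (rule ccontr)
          assume "Zp (f Q) \<noteq> \<infinity>"
          then have "Zp (f Q) < \<top>" by (simp add: less_top)
          from ennreal_Ex_less_of_nat[OF this] obtain k :: nat where k: "Zp (f Q) < of_nat k" ..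
          have "ennreal (real k + 1) < Zp (f Q)" using elim by blast
          moreover have "(of_nat k :: ennreal) \<le> ennreal (real k + 1)"
          proof -
            have "(of_nat k :: ennreal) = ennreal (real k)" by (rule ennreal_of_nat_eq_real_of_nat)
            also have "\<dots> \<le> ennreal (real k + 1)" by (rule ennreal_leI) simp
            finally show ?thesis .
          qed
          ultimately have "Zp (f Q) < Zp (f Q)" using k by (rule_tac less_trans[OF k le_less_trans])
          then show False by simp
        qed
      qed
    qed
    have "AE Q in M. soft_value \<alpha> A (f Q) = 0"
      using AE_space AEinf
    proof eventually_elim
      case (elim Q)
      then show ?case using sv[OF fQ[of Q]] by simp
    qed
    then have "(\<integral>Q. soft_value \<alpha> A (f Q) \<partial>M) = (\<integral>Q. 0 \<partial>M)"
      by (intro integral_cong_AE) (use int in auto)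
    then have "(\<integral>Q. soft_value \<alpha> A (f Q) \<partial>M) = 0" by simp
    moreover have "soft_value \<alpha> A m = 0" using svm True by simp
    ultimately show ?thesis using S0 alpha by (simp add: m_eq S_def[symmetric])
  qed
qed
theorem theorem2:
  fixes A :: "'a::euclidean_space set"
    and R :: "'s \<Rightarrow> 'a \<Rightarrow> real"
    and \<tau> :: "'s \<Rightarrow> 'a \<Rightarrow> 's measure"
    and QQ :: "('s \<Rightarrow> 'a \<Rightarrow> real) measure"
    and \<sigma>2 :: "'s \<Rightarrow> 'a \<Rightarrow> real"
    and \<gamma> \<alpha> :: real
  assumes A_meas: "A \<in> sets lborel"
    and A_pos: "0 < emeasure lborel A" and A_fin: "emeasure lborel A < \<infinity>"
    and kernel: "\<And>s a. prob_space (\<tau> s a)"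
    and gamma: "0 < \<gamma>" "\<gamma> < 1"
    and alpha: "0 < \<alpha>"
    and QQ_prob: "prob_space QQ"
    and Q_meas: "\<And>s. (\<lambda>(Q, a). Q s a) \<in> borel_measurable (QQ \<Otimes>\<^sub>M lborel)"
    and bounded_support: "\<And>s a. \<exists>B. AE Q in QQ. \<bar>Q s a\<bar> \<le> B"
    and subgauss: "\<And>s a. sub_gaussian QQ (\<lambda>Q. Q s a) (\<sigma>2 s a)"
    and wd_QQ: "\<And>s'. integrable QQ (\<lambda>Q. soft_value \<alpha> A (Q s'))"
    and wd_TQ: "\<And>s a. integrable (\<tau> s a) (\<lambda>s'. \<integral>Q. soft_value \<alpha> A (Q s') \<partial>QQ)"
    and wd_Tmu: "\<And>s a. integrable (\<tau> s a) (\<lambda>s'. soft_value \<alpha> A (mean_Q QQ s'))"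
    and wd_sup_bdd: "\<And>s'. bdd_above (\<sigma>2 s' ` A)"
    and wd_sup: "\<And>s a. integrable (\<tau> s a) (\<lambda>s'. SUP a'\<in>A. \<sigma>2 s' a')"
  shows "\<forall>s. \<forall>a\<in>A. overest_error R \<gamma> \<alpha> A \<tau> QQ s a
           \<le> \<gamma> / (2 * \<alpha>) * (\<integral>s'. (SUP a'\<in>A. \<sigma>2 s' a') \<partial>\<tau> s a)"
proof (intro allI ballI)
  fix s a
  interpret T: prob_space "\<tau> s a" by (rule kernel)
  define E where "E = (\<lambda>s'. \<integral>Q. soft_value \<alpha> A (Q s') \<partial>QQ)"
  define Mu where "Mu = (\<lambda>s'. soft_value \<alpha> A (mean_Q QQ s'))"
  define Sg where "Sg = (\<lambda>s'. SUP a'\<in>A. \<sigma>2 s' a')"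
  have key_s: "E s' \<le> Mu s' + Sg s' / (2*\<alpha>)" for s'
  proof -
    have mq: "(\<lambda>a. \<integral>Q. Q s' a \<partial>QQ) = mean_Q QQ s'" by (rule ext) (simp add: mean_Q_def)
    have "(\<integral>Q. soft_value \<alpha> A (Q s') \<partial>QQ)
        \<le> soft_value \<alpha> A (\<lambda>a. \<integral>Q. Q s' a \<partial>QQ) + (SUP a\<in>A. \<sigma>2 s' a) / (2*\<alpha>)"
    proof (rule key[where f="\<lambda>Q a. Q s' a"])
      show "prob_space QQ" by (rule QQ_prob)
      show "(\<lambda>(Q, a). Q s' a) \<in> borel_measurable (QQ \<Otimes>\<^sub>M lborel)" by (rule Q_meas)
      show "\<And>a l. (\<integral>Q. exp (l * Q s' a) \<partial>QQ) \<le> exp (l * (\<integral>Q. Q s' a \<partial>QQ) + l\<^sup>2 * \<sigma>2 s' a / 2)"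
        using subgauss unfolding sub_gaussian_def by blast
    qed (use A_meas A_pos A_fin alpha bounded_support wd_sup_bdd wd_QQ in auto)
    then show ?thesis by (simp add: E_def Mu_def Sg_def mq)
  qed
  have iE: "integrable (\<tau> s a) E" using wd_TQ[of s a] by (simp add: E_def)
  have iMu: "integrable (\<tau> s a) Mu" using wd_Tmu[of s a] by (simp add: Mu_def)
  have iS: "integrable (\<tau> s a) Sg" using wd_sup[of s a] by (simp add: Sg_def)
  have eq: "overest_error R \<gamma> \<alpha> A \<tau> QQ s a = \<gamma> * ((\<integral>s'. E s' \<partial>\<tau> s a) - (\<integral>s'. Mu s' \<partial>\<tau> s a))"
  proof -
    have "(\<integral>s'. bellman_Q R \<gamma> \<alpha> A QQ s a s' \<partial>\<tau> s a) = (\<integral>s'. R s a + \<gamma> * E s' \<partial>\<tau> s a)"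
      by (simp add: bellman_Q_def E_def)
    also have "\<dots> = R s a + \<gamma> * (\<integral>s'. E s' \<partial>\<tau> s a)"
      using iE by (simp add: T.prob_space)
    finally show ?thesis
      unfolding overest_error_def bellman_mu_def Mu_def[symmetric] by (simp add: algebra_simps)
  qed
  have "(\<integral>s'. E s' \<partial>\<tau> s a) - (\<integral>s'. Mu s' \<partial>\<tau> s a) = (\<integral>s'. E s' - Mu s' \<partial>\<tau> s a)"
    using iE iMu by simp
  also have "\<dots> \<le> (\<integral>s'. Sg s' / (2*\<alpha>) \<partial>\<tau> s a)"
    using iE iMu iS key_s by (intro integral_mono) (auto simp: algebra_simps)
  also have "\<dots> = (\<integral>s'. Sg s' \<partial>\<tau> s a) / (2*\<alpha>)" by simp
  finally have "\<gamma> * ((\<integral>s'. E s' \<partial>\<tau> s a) - (\<integral>s'. Mu s' \<partial>\<tau> s a)) \<le> \<gamma> * ((\<integral>s'. Sg s' \<partial>\<tau> s a) / (2*\<alpha>))"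
    using gamma by (intro mult_left_mono) auto
  then show "overest_error R \<gamma> \<alpha> A \<tau> QQ s a \<le> \<gamma> / (2 * \<alpha>) * (\<integral>s'. (SUP a'\<in>A. \<sigma>2 s' a') \<partial>\<tau> s a)"
    unfolding eq Sg_def by simp
qed

end
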